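(* In the setting of the context, fix $r\in\{0,\dots,d\}$ and assume that in $\Delta$ vertex $r$ is adjacent to exactly one other vertex. Then $a^*_r\ne\theta^*_0$.
   Context: Let $\mathbb F$ be a field, $d\ge1$ an integer, $V$ a vector space over $\mathbb F$ of dimension $d+1$, $\mathcal A=\mathrm{End}(V)$ with identity $I$. Let $E^*_0,\dots,E^*_d\in\mathcal A$ satisfy $E^*_iE^*_j=\delta_{i,j}E^*_i$ and $\mathrm{rank}(E^*_i)=1$ for $0\le i,j\le d$. Let $A\in\mathcal A$ satisfy $E^*_iAE^*_j=0$ if $|i-j|>1$ and $E^*_iAE^*_j\neq0$ if $|i-j|=1$. Assume $A$ has $d+1$ mutually distinct eigenvalues $\theta_0,\dots,\theta_d$ in $\mathbb F$, and let $E_i=\prod_{j\ne i}\frac{A-\theta_jI}{\theta_i-\theta_j}$ be the primitive idempotent of $A$ for $\theta_i$. Let $\theta^*_0,\dots,\theta^*_d\in\mathbb F$ and $A^*=\sum_{i=0}^d\theta^*_iE^*_i$. Define $a^*_i=\mathrm{tr}(E_iA^* )$. Let $\Delta$ be the graph on vertex set $\{0,\dots,d\}$ in which $i,j$ are adjacent iff $i\ne j$ and $E_iA^*E_j\ne0$. *)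

theory Defs
  imports "HOL-Analysis.Analysis"
begin

text \<open>Primitive idempotent of A for the eigenvalue th i, among th 0 .. th d:
  E_i = prod over j in {0..d}, j ~= i, of (A - th j I)/(th i - th j).
  (The factors commute, so the order of the product is immaterial.)\<close>
definition prim_idem :: "('a::field)^'n^'n \<Rightarrow> (nat \<Rightarrow> 'a) \<Rightarrow> nat \<Rightarrow> nat \<Rightarrow> 'a^'n^'n" where
  "prim_idem A th d i =
     foldr (\<lambda>j M. (mat (1 / (th i - th j)) ** (A - mat (th j))) ** M)
           (filter (\<lambda>j. j \<noteq> i) [0..<Suc d]) (mat 1)"

end

theory Submission imports Defs begin

definition outer :: "'a::comm_ring_1^'n \<Rightarrow> 'a^'m \<Rightarrow> 'a^'m^'n" where
  "outer p q = (\<chi> a b. p$a * q$b)"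

definition dotv :: "'a::comm_ring_1^'n \<Rightarrow> 'a^'n \<Rightarrow> 'a" where
  "dotv q p = (\<Sum>b\<in>UNIV. q$b * p$b)"

lemma mat_mult_comp: "(mat c ** M) $ i $ j = (c::'a::comm_ring_1) * M $ i $ j"
  by (simp add: matrix_matrix_mult_def mat_def if_distrib if_distribR sum.delta' cong: if_cong)

lemma mult_mat_comp: "(M ** mat c) $ i $ j = M $ i $ j * (c::'a::comm_ring_1)"
  by (simp add: matrix_matrix_mult_def mat_def if_distrib if_distribR sum.delta' cong: if_cong)

lemma mat_comm: "M ** mat c = mat (c::'a::comm_ring_1) ** M"
  by (simp add: vec_eq_iff mat_mult_comp mult_mat_comp mult.commute)

lemma mat_vec: "mat c *v x = (c::'a::comm_ring_1) *s x"
  by (simp add: vec_eq_iff matrix_vector_mult_def mat_def if_distrib if_distribR sum.delta' cong: if_cong)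

lemma mat_mat: "mat a ** (mat b ** M) = mat ((a::'a::comm_ring_1) * b) ** M"
  by (simp add: vec_eq_iff mat_mult_comp mult.assoc)

lemma axis_col: "(M *v axis b 1) $ a = (M $ a $ b :: 'a::comm_ring_1)"
  by (simp add: matrix_vector_mult_def axis_def if_distrib if_distribR sum.delta' cong: if_cong)

lemma mult_sum_right: "(X::'a::comm_ring_1^'n^'m) ** sum f S = (\<Sum>i\<in>S. X ** f i)"
  by (induct S rule: infinite_finite_induct) (auto simp: matrix_add_ldistrib)

lemma matrix_add_rdistrib': "((B + C) ** (A::'a::comm_ring_1^'n^'m)) = (B ** A) + (C ** A)"
  by (vector matrix_matrix_mult_def sum.distrib[symmetric] field_simps)

lemma mult_sum_left: "sum f S ** (X::'a::comm_ring_1^'n^'m) = (\<Sum>i\<in>S. f i ** X)"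
  by (induct S rule: infinite_finite_induct) (auto simp: matrix_add_rdistrib')

lemma sum_mult_vec: "sum f S *v (x::'a::comm_ring_1^'n) = (\<Sum>i\<in>S. f i *v x)"
  by (induct S rule: infinite_finite_induct) (auto simp: matrix_vector_mult_add_rdistrib)

lemma outer_vec: "outer p q *v x = dotv q x *s p"
  by (simp add: vec_eq_iff outer_def dotv_def matrix_vector_mult_def sum_distrib_left mult_ac)

lemma mult_outer: "X ** outer p q = outer (X *v p) q"
  by (simp add: vec_eq_iff outer_def matrix_vector_mult_def matrix_matrix_mult_def sum_distrib_left sum_distrib_right mult_ac)

lemma outer_mult: "outer p q ** X = outer p (q v* X)"
  by (simp add: vec_eq_iff outer_def vector_matrix_mult_def matrix_matrix_mult_def sum_distrib_left mult_ac)

lemma outer_outer: "outer p q ** outer p' q' = mat (dotv q p') ** outer p q'"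
  unfolding vec_eq_iff mat_mult_comp by (simp add: outer_def dotv_def matrix_matrix_mult_def sum_distrib_left sum_distrib_right mult_ac)

lemma outer_eq_0: "outer p q = (0::'a::field^'m^'n) \<longleftrightarrow> p = 0 \<or> q = 0"
  by (auto simp: vec_eq_iff outer_def)

lemma mat_mult_eq_0: "(mat c ** M = (0::'a::field^'m^'n)) \<longleftrightarrow> c = 0 \<or> M = 0"
  by (auto simp: vec_eq_iff mat_mult_comp)

lemma outer_trace: "outer p q ** X ** outer p q = mat (trace (outer p q ** X)) ** outer p q"
proof -
  have "trace (outer p q ** X) = dotv (q v* X) p"
    unfolding outer_mult by (simp add: trace_def outer_def dotv_def mult.commute)
  then show ?thesis unfolding outer_mult[of p q X] outer_outer by simp
qed

lemma outer_sandwich: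
  "outer p q ** X ** outer p' q' = mat (dotv (q v* X) p') ** outer p q'"
  unfolding outer_mult[of p q X] outer_outer by simp


lemma rank1_outer:
  fixes M :: "'a::field^'n^'m"
  assumes "rank M = 1"
  shows "\<exists>p q. M = outer p q \<and> p \<noteq> 0 \<and> q \<noteq> 0"
proof -
  obtain B where B: "B \<subseteq> rows M" "vec.independent B" "rows M \<subseteq> vec.span B"
    "card B = vec.dim (rows M)"
    using vec.basis_exists by blast
  then have "card B = 1" using assms by (simp add: row_rank_def_gen)
  then obtain q where q: "B = {q}" by (auto simp: card_1_singleton_iff)
  have q0: "q \<noteq> 0" using B(2) q vec.dependent_zero by blast
  have "\<forall>i. \<exists>c. row i M = c *s q"
  proof
    fix i
    have "row i M \<in> rows M" by (auto simp: rows_def)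
    then have "row i M \<in> vec.span {q}" using B(3) q by blast
    then show "\<exists>c. row i M = c *s q" by (auto simp: vec.span_singleton)
  qed
  then obtain c where c: "\<And>i. row i M = c i *s q" by metis
  define p where "p = (\<chi> i. c i)"
  have M: "M = outer p q"
    unfolding vec_eq_iff outer_def p_def
  proof (intro allI)
    fix i j
    have "M $ i $ j = row i M $ j" by (simp add: row_def)
    then show "M $ i $ j = (\<chi> a b. (\<chi> i. c i) $ a * q $ b) $ i $ j" using c by simp
  qed
  have "p \<noteq> 0"
  proof
    assume "p = 0"
    then have "M = 0" using M by (simp add: outer_eq_0)
    then have "rows M = {0}" by (auto simp: rows_def row_def vec_eq_iff)
    then have "rank M = 0" by (simp add: row_rank_def_gen)
    then show False using assms by simp
  qed
  then show ?thesis using M q0 by blast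
qed

lemma basis_from_duals:
  fixes v :: "nat \<Rightarrow> 'a::field^'n" and M :: "nat \<Rightarrow> 'a^'n^'n"
  assumes card: "CARD('n) = d+1"
    and dual: "\<And>i j. i\<le>d \<Longrightarrow> j\<le>d \<Longrightarrow> M j *v v i = (if i = j then v i else 0)"
    and nz: "\<And>i. i \<le> d \<Longrightarrow> v i \<noteq> 0"
  shows "vec.span (v ` {..d}) = UNIV"
proof -
  have inj: "inj_on v {..d}"
  proof (rule inj_onI)
    fix i j assume ij: "i \<in> {..d}" "j \<in> {..d}" "v i = v j"
    show "i = j"
    proof (rule ccontr)
      assume "i \<noteq> j"
      from dual[of i j] dual[of j j] ij \<open>i\<noteq>j\<close> have "v j = 0" by auto
      then show False using ij nz by simp
    qed
  qed
  have ind: "vec.independent (v ` {..d})"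
  proof (rule vec.independent_if_scalars_zero)
    show "finite (v ` {..d})" by simp
    fix f x assume s: "(\<Sum>x\<in>v ` {..d}. f x *s x) = 0" and x: "x \<in> v ` {..d}"
    then obtain j where j: "j \<le> d" "x = v j" by auto
    have mj: "M j *v y = (if y = v j then y else 0)" if yin: "y \<in> v ` {..d}" for y
    proof -
      obtain i where i: "i \<le> d" "y = v i" using yin by auto
      have "y = v j \<longleftrightarrow> i = j" using inj i j by (auto dest: inj_onD)
      then show ?thesis using dual i j by simp
    qed
    have "0 = M j *v (\<Sum>x\<in>v ` {..d}. f x *s x)" using s by simp
    also have "\<dots> = (\<Sum>y\<in>v ` {..d}. f y *s (M j *v y))"
      by (simp add: vec.sum vec.scale)
    also have "\<dots> = (\<Sum>y\<in>v ` {..d}. if y = v j then f y *s y else 0)"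
      by (rule sum.cong) (auto simp: mj)
    also have "\<dots> = f (v j) *s v j" using j by (simp add: sum.delta')
    finally have "f (v j) *s v j = 0" by simp
    then show "f x = 0" using nz j by (simp add: vec_eq_iff) (metis mult_eq_0_iff zero_index vec_eq_iff)
  qed
  have "card (v ` {..d}) = vec.dim (UNIV :: ('a^'n) set)"
    using card_image[OF inj] card by (simp add: card_cart_basis)
  then have "UNIV \<subseteq> vec.span (v ` {..d})"
    using vec.card_eq_dim[of "v ` {..d}" UNIV] ind by simp
  then show ?thesis by auto
qed

lemma eq_on_span:
  fixes X Y :: "'a::field^'n^'m"
  assumes sp: "vec.span S = UNIV" and eq: "\<And>x. x \<in> S \<Longrightarrow> X *v x = Y *v x"
  shows "X = Y"
proof -
  have sub: "vec.subspace {x. X *v x = Y *v x}"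
    by (auto simp: vec.subspace_def vec.add vec.scale)
  have "X *v x = Y *v x" for x
  proof -
    have "x \<in> vec.span S" using sp by simp
    then show ?thesis using vec.span_induct[OF _ sub] eq by blast
  qed
  then show ?thesis by (simp add: matrix_eq)
qed

lemma prod_list_one: "(\<forall>x\<in>set xs. f x = (1::'a::comm_monoid_mult)) \<Longrightarrow> prod_list (map f xs) = 1"
  by (induct xs) auto

lemma prod_list_zero: "x\<in>set xs \<Longrightarrow> f x = (0::'a::comm_semiring_1) \<Longrightarrow> prod_list (map f xs) = 0"
  by (induct xs) auto

lemma foldr_eig:
  fixes A :: "'a::field^'n^'n"
  assumes "A *v v = t *s v"
  shows "foldr (\<lambda>j M. (mat (1 / (s - th j)) ** (A - mat (th j))) ** M) js (mat 1) *v v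
         = (\<Prod>j\<leftarrow>js. 1 / (s - th j) * (t - th j)) *s v"
proof (induct js)
  case Nil then show ?case by simp
next
  case (Cons j js)
  let ?F = "foldr (\<lambda>j M. (mat (1 / (s - th j)) ** (A - mat (th j))) ** M) js (mat 1)"
  let ?c = "(\<Prod>j\<leftarrow>js. 1 / (s - th j) * (t - th j))"
  have "(mat (1 / (s - th j)) ** (A - mat (th j)) ** ?F) *v v
      = mat (1 / (s - th j)) *v ((A - mat (th j)) *v (?c *s v))"
    using Cons by (simp add: matrix_vector_mul_assoc[symmetric])
  also have "\<dots> = (1 / (s - th j) * (t - th j) * ?c) *s v"
    by (simp add: mat_vec matrix_vector_mult_diff_rdistrib vec.scale assms vec_eq_iff algebra_simps diff_divide_distrib)
  finally show ?case by simp
qed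


theorem lemma7p12:
  fixes d r :: nat
    and Es :: "nat \<Rightarrow> ('a::field)^'n^'n"
    and A :: "'a^'n^'n"
    and th ths :: "nat \<Rightarrow> 'a"
  assumes d1: "d \<ge> 1"
    and dimV: "CARD('n) = d + 1"
    and Es_idem: "\<And>i j. i \<le> d \<Longrightarrow> j \<le> d \<Longrightarrow> Es i ** Es j = (if i = j then Es i else 0)"
    and Es_rank: "\<And>i. i \<le> d \<Longrightarrow> rank (Es i) = 1"
    and A_tri0: "\<And>i j. i \<le> d \<Longrightarrow> j \<le> d \<Longrightarrow> (i > j + 1 \<or> j > i + 1) \<Longrightarrow> Es i ** A ** Es j = 0"
    and A_tri1: "\<And>i j. i \<le> d \<Longrightarrow> j \<le> d \<Longrightarrow> (i = j + 1 \<or> j = i + 1) \<Longrightarrow> Es i ** A ** Es j \<noteq> 0"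
    and th_distinct: "inj_on th {0..d}"
    and th_eig: "\<And>i. i \<le> d \<Longrightarrow> \<exists>v. v \<noteq> 0 \<and> A *v v = th i *s v"
    and r_le: "r \<le> d"
    and deg1: "card {j. j \<le> d \<and> j \<noteq> r \<and>
                 prim_idem A th d r ** (\<Sum>i\<le>d. mat (ths i) ** Es i) ** prim_idem A th d j \<noteq> 0} = 1"
  shows "trace (prim_idem A th d r ** (\<Sum>i\<le>d. mat (ths i) ** Es i)) \<noteq> ths 0"
proof
  assume a0: "trace (prim_idem A th d r ** (\<Sum>i\<le>d. mat (ths i) ** Es i)) = ths 0"
  define P where "P = prim_idem A th d"
  define Ast where "Ast = (\<Sum>i\<le>d. mat (ths i) ** Es i)"
  have "\<forall>i. \<exists>p q. i \<le> d \<longrightarrow> (Es i = outer p q \<and> p \<noteq> 0 \<and> q \<noteq> 0)"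
    using rank1_outer Es_rank by metis
  then obtain pe qe where pq: "\<And>i. i \<le> d \<Longrightarrow> Es i = outer (pe i) (qe i) \<and> pe i \<noteq> 0 \<and> qe i \<noteq> 0"
    by metis
  have dotE: "dotv (qe j) (pe i) = (if i = j then 1 else 0)" if "i \<le> d" "j \<le> d" for i j
  proof (cases "i = j")
    case True
    have "mat (dotv (qe i) (pe i)) ** outer (pe i) (qe i) = mat 1 ** outer (pe i) (qe i)"
      using Es_idem[of i i] pq[of i] that True by (simp add: outer_outer)
    then have "mat (dotv (qe i) (pe i) - 1) ** outer (pe i) (qe i) = 0"
      by (simp add: vec_eq_iff mat_mult_comp algebra_simps)
    then show ?thesis using True pq[of i] that by (simp add: mat_mult_eq_0 outer_eq_0)
  next
    case False
    have "mat (dotv (qe j) (pe i)) ** outer (pe j) (qe i) = 0"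
      using Es_idem[of j i] pq[of i] pq[of j] that False by (simp add: outer_outer)
    then show ?thesis using False pq[of i] pq[of j] that by (simp add: mat_mult_eq_0 outer_eq_0)
  qed
  have dualE: "Es j *v pe i = (if i = j then pe i else 0)" if "i \<le> d" "j \<le> d" for i j
    using pq[of j] dotE[OF that] that by (simp add: outer_vec)
  have spanE: "vec.span (pe ` {..d}) = UNIV"
    by (rule basis_from_duals[OF dimV dualE]) (use pq in auto)
  have EsI: "(\<Sum>i\<le>d. Es i) = mat 1"
  proof (rule eq_on_span[OF spanE])
    fix x assume "x \<in> pe ` {..d}"
    then obtain k where k: "k \<le> d" "x = pe k" by auto
    have "(\<Sum>i\<le>d. Es i) *v x = (\<Sum>i\<le>d. Es i *v pe k)" using k by (simp add: sum_mult_vec)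
    also have "\<dots> = (\<Sum>i\<le>d. if k = i then pe k else 0)"
      by (rule sum.cong) (use k dualE in auto)
    also have "\<dots> = x" using k by simp
    finally show "(\<Sum>i\<le>d. Es i) *v x = mat 1 *v x" by simp
  qed
  have "\<forall>i. \<exists>v. i \<le> d \<longrightarrow> v \<noteq> 0 \<and> A *v v = th i *s v" using th_eig by metis
  then obtain ev where ev: "\<And>i. i \<le> d \<Longrightarrow> ev i \<noteq> 0 \<and> A *v ev i = th i *s ev i" by metis
  have dualP: "P j *v ev i = (if i = j then ev i else 0)" if ij: "i \<le> d" "j \<le> d" for i j
  proof -
    have "P j *v ev i = (\<Prod>k\<leftarrow>filter (\<lambda>k. k \<noteq> j) [0..<Suc d]. 1 / (th j - th k) * (th i - th k)) *s ev i"
      unfolding P_def prim_idem_def by (rule foldr_eig) (use ev ij in auto)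
    also have "\<dots> = (if i = j then ev i else 0)"
    proof (cases "i = j")
      case True
      have "(\<Prod>k\<leftarrow>filter (\<lambda>k. k \<noteq> j) [0..<Suc d]. 1 / (th j - th k) * (th i - th k)) = 1"
      proof (rule prod_list_one, intro ballI)
        fix k assume "k \<in> set (filter (\<lambda>k. k \<noteq> j) [0..<Suc d])"
        then have "k \<le> d" "k \<noteq> j" by (auto simp del: upt_Suc)
        then have "th j \<noteq> th k" using th_distinct ij by (auto dest: inj_onD)
        then show "1 / (th j - th k) * (th i - th k) = 1" using True by simp
      qed
      then show ?thesis using True by simp
    next
      case False
      have "(\<Prod>k\<leftarrow>filter (\<lambda>k. k \<noteq> j) [0..<Suc d]. 1 / (th j - th k) * (th i - th k)) = 0"
        by (rule prod_list_zero[of i]) (use False ij in auto)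
      then show ?thesis using False by simp
    qed
    finally show ?thesis .
  qed
  have spanP: "vec.span (ev ` {..d}) = UNIV"
    by (rule basis_from_duals[OF dimV dualP]) (use ev in auto)
  have PI: "(\<Sum>j\<le>d. P j) = mat 1"
  proof (rule eq_on_span[OF spanP])
    fix x assume "x \<in> ev ` {..d}"
    then obtain k where k: "k \<le> d" "x = ev k" by auto
    have "(\<Sum>i\<le>d. P i) *v x = (\<Sum>i\<le>d. P i *v ev k)" using k by (simp add: sum_mult_vec)
    also have "\<dots> = (\<Sum>i\<le>d. if k = i then ev k else 0)"
      by (rule sum.cong) (use k dualP in auto)
    also have "\<dots> = x" using k by simp
    finally show "(\<Sum>i\<le>d. P i) *v x = mat 1 *v x" by simp
  qed
  have PA: "P s ** A = mat (th s) ** P s" if s: "s \<le> d" for s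
  proof (rule eq_on_span[OF spanP])
    fix x assume "x \<in> ev ` {..d}"
    then obtain k where k: "k \<le> d" "x = ev k" by auto
    have "(P s ** A) *v x = th k *s (P s *v ev k)"
      using k ev[of k] by (simp add: matrix_vector_mul_assoc[symmetric] vec.scale)
    also have "\<dots> = th s *s (P s *v ev k)" using dualP[OF k(1) s] by simp
    also have "\<dots> = (mat (th s) ** P s) *v x"
      using k by (simp add: matrix_vector_mul_assoc[symmetric] mat_vec)
    finally show "(P s ** A) *v x = (mat (th s) ** P s) *v x" .
  qed
  have sub: "vec.subspace {x. \<exists>c. P r *v x = c *s ev r}"
    unfolding vec.subspace_def
  proof (intro conjI ballI allI)
    show "0 \<in> {x. \<exists>c. P r *v x = c *s ev r}" by (auto intro: exI[of _ 0])
  next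
    fix x y assume "x \<in> {x. \<exists>c. P r *v x = c *s ev r}" "y \<in> {x. \<exists>c. P r *v x = c *s ev r}"
    then obtain c1 c2 where "P r *v x = c1 *s ev r" "P r *v y = c2 *s ev r" by auto
    then have "P r *v (x + y) = (c1 + c2) *s ev r"
      by (simp add: vec.add vector_sadd_rdistrib)
    then show "x + y \<in> {x. \<exists>c. P r *v x = c *s ev r}" by blast
  next
    fix c x assume "x \<in> {x. \<exists>c. P r *v x = c *s ev r}"
    then obtain c1 where "P r *v x = c1 *s ev r" by auto
    then have "P r *v (c *s x) = (c * c1) *s ev r" by (simp add: vec.scale vector_smult_assoc)
    then show "c *s x \<in> {x. \<exists>c. P r *v x = c *s ev r}" by blast
  qed
  have img: "\<exists>c. P r *v x = c *s ev r" for x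
  proof -
    have "x \<in> vec.span (ev ` {..d})" using spanP by simp
    then show ?thesis
    proof (rule vec.span_induct[OF _ sub, simplified])
      fix y assume "y \<in> ev ` {..d}"
      then obtain k where k: "k \<le> d" "y = ev k" by auto
      show "\<exists>c. P r *v y = c *s ev r"
        using dualP[OF k(1) r_le] k by (cases "k = r") (auto intro: exI[of _ 1] exI[of _ 0])
    qed
  qed
  then obtain cf where cf: "\<And>x. P r *v x = cf x *s ev r" by metis
  define g where "g = (\<chi> b. cf (axis b 1))"
  have Pr: "P r = outer (ev r) g"
  proof -
    have "P r $ a $ b = outer (ev r) g $ a $ b" for a b
      using axis_col[of "P r" b a] cf[of "axis b 1"] by (simp add: outer_def g_def mult.commute)
    then show ?thesis by (simp add: vec_eq_iff)
  qed
  obtain s where S: "{j. j \<le> d \<and> j \<noteq> r \<and> P r ** Ast ** P j \<noteq> 0} = {s}"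
    using deg1 unfolding P_def Ast_def by (auto simp: card_1_singleton_iff)
  then have s: "s \<le> d" "s \<noteq> r" "P r ** Ast ** P s \<noteq> 0" by auto
  define Y where "Y = P r ** Ast ** P s"
  have zero: "P r ** Ast ** P j = 0" if "j \<le> d" "j \<noteq> r" "j \<noteq> s" for j
    using S that by blast
  have "P r ** Ast = P r ** Ast ** (\<Sum>j\<le>d. P j)" using PI by simp
  also have "\<dots> = (\<Sum>j\<le>d. P r ** Ast ** P j)" by (simp add: mult_sum_right)
  also have "\<dots> = (\<Sum>j\<in>{r,s}. P r ** Ast ** P j)"
    by (rule sum.mono_neutral_right) (use s r_le zero in auto)
  also have "\<dots> = P r ** Ast ** P r + Y" using s Y_def by simp
  also have "P r ** Ast ** P r = mat (trace (P r ** Ast)) ** P r"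
    unfolding Pr by (rule outer_trace)
  also have "trace (P r ** Ast) = ths 0" using a0 unfolding P_def Ast_def .
  finally have dec: "P r ** Ast = mat (ths 0) ** P r + Y" .
  have AstE0: "Ast ** Es 0 = mat (ths 0) ** Es 0"
  proof -
    have "Ast ** Es 0 = (\<Sum>i\<le>d. mat (ths i) ** (Es i ** Es 0))"
      unfolding Ast_def by (simp add: mult_sum_left matrix_mul_assoc)
    also have "\<dots> = (\<Sum>i\<le>d. if i = 0 then mat (ths 0) ** Es 0 else 0)"
      by (rule sum.cong) (auto simp: Es_idem)
    also have "\<dots> = mat (ths 0) ** Es 0" by simp
    finally show ?thesis .
  qed
  have "P r ** Ast ** Es 0 = mat (ths 0) ** (P r ** Es 0)"
    by (simp add: matrix_mul_assoc[symmetric] AstE0) (simp add: matrix_mul_assoc mat_comm)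
  moreover have "P r ** Ast ** Es 0 = mat (ths 0) ** (P r ** Es 0) + Y ** Es 0"
    unfolding dec by (simp add: matrix_add_rdistrib' matrix_mul_assoc)
  ultimately have Y0: "Y ** Es 0 = 0" by simp
  have YA: "Y ** A = mat (th s) ** Y"
    unfolding Y_def by (simp add: matrix_mul_assoc[symmetric] PA[OF s(1)]) (simp add: matrix_mul_assoc mat_comm)
  have Yall: "\<forall>i\<le>k. Y ** Es i = 0" if "k \<le> d" for k
    using that
  proof (induct k)
    case 0 then show ?case using Y0 by simp
  next
    case (Suc k)
    then have IH: "\<And>i. i \<le> k \<Longrightarrow> Y ** Es i = 0" by simp
    have kd: "k < d" using Suc by simp
    have "Y ** A ** Es k = mat (th s) ** (Y ** Es k)"
      by (simp add: YA matrix_mul_assoc)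
    also have "\<dots> = 0" using IH by simp
    finally have z1: "Y ** A ** Es k = 0" .
    have "Y ** A ** Es k = Y ** (\<Sum>j\<le>d. Es j) ** A ** Es k" using EsI by simp
    also have "\<dots> = (\<Sum>j\<le>d. Y ** Es j ** A ** Es k)"
      by (simp add: mult_sum_right mult_sum_left)
    also have "\<dots> = Y ** Es (Suc k) ** A ** Es k"
    proof -
      have "(\<Sum>j\<le>d. Y ** Es j ** A ** Es k) = (\<Sum>j\<in>{Suc k}. Y ** Es j ** A ** Es k)"
      proof (rule sum.mono_neutral_right)
        show "\<forall>j\<in>{..d} - {Suc k}. Y ** Es j ** A ** Es k = 0"
        proof
          fix j assume j: "j \<in> {..d} - {Suc k}"
          show "Y ** Es j ** A ** Es k = 0"
          proof (cases "j \<le> k")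
            case True then show ?thesis using IH by simp
          next
            case False
            then have "j > k + 1" using j by auto
            then have "Es j ** A ** Es k = 0" using A_tri0[of j k] j kd by auto
            then show ?thesis by (simp add: matrix_mul_assoc[symmetric])
          qed
        qed
      qed (use kd in auto)
      then show ?thesis by simp
    qed
    finally have z2: "Y ** Es (Suc k) ** A ** Es k = 0" using z1 by simp
    have nz: "Es (Suc k) ** A ** Es k \<noteq> 0" using A_tri1[of "Suc k" k] kd by simp
    obtain p1 q1 p0 q0 where e1: "Es (Suc k) = outer p1 q1" and e0: "Es k = outer p0 q0"
      using pq[of k] pq[of "Suc k"] kd by auto
    have "Y ** Es (Suc k) ** A ** Es k = mat (dotv (q1 v* A) p0) ** outer (Y *v p1) q0"
      unfolding e1 e0 mult_outer[of Y p1 q1] outer_sandwich ..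
    moreover have "Es (Suc k) ** A ** Es k = mat (dotv (q1 v* A) p0) ** outer p1 q0"
      unfolding e1 e0 outer_sandwich ..
    ultimately have "Y *v p1 = 0" using z2 nz by (simp add: mat_mult_eq_0 outer_eq_0)
    then have "Y ** Es (Suc k) = 0" unfolding e1 mult_outer by (simp add: outer_eq_0)
    then show ?case using IH le_Suc_eq by blast
  qed
  have "Y = Y ** (\<Sum>k\<le>d. Es k)" using EsI by simp
  also have "\<dots> = (\<Sum>k\<le>d. Y ** Es k)" by (simp add: mult_sum_right)
  also have "\<dots> = 0" using Yall[of d] by simp
  finally show False using s(3) Y_def by simp
qed

end
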